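(* For all $n\ge1$, all $\beta\ge n$, and every symmetric positive semidefinite $n\times n$ matrix $M$, $$\beta+\operatorname{tr}(M-I)-\beta(\det M)^{1/\beta}\ \ge\ \frac{3}{64\beta}\Big(1-\frac n\beta\Big)^2\mathcal F\big(\|M-I\|_{\mathrm{HS}}\big),$$ where $\mathcal F(t)=t-\log(1+t)$ and $\|\cdot\|_{\mathrm{HS}}$ is the Hilbert–Schmidt norm.
   Context: The left-hand side is $\mathcal G_\kappa(M)=\frac1\kappa(\det M)^{-\kappa}-\frac1\kappa+\operatorname{tr}(M-I)$ with $\kappa=-1/\beta$. *)

theory Defs
  imports "HOL-Analysis.Analysis"
begin

definition psd_matrix :: "real^'n^'n \<Rightarrow> bool" where
  "psd_matrix M \<longleftrightarrow> transpose M = M \<and> (\<forall>x::real^'n. 0 \<le> x \<bullet> (M *v x))"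

definition hs_norm :: "real^'n^'m \<Rightarrow> real" where
  "hs_norm A = sqrt (\<Sum>i\<in>UNIV. \<Sum>j\<in>UNIV. (A $ i $ j)^2)"

definition F_fun :: "real \<Rightarrow> real" where
  "F_fun t = t - ln (1 + t)"

end

theory Submission
  imports Defs
begin

lemma quad_zero:
  fixes a b :: real
  assumes "\<And>t. a*t + b*t^2 \<le> 0"
  shows "a = 0"
proof -
  define t where "t = a / (2*(\<bar>b\<bar>+1))"
  have "a*t + b*t^2 \<le> 0" using assms by blast
  hence "4*(\<bar>b\<bar>+1)^2 * (a*t + b*t^2) \<le> 0"
    by (simp add: mult_nonneg_nonpos)
  moreover have "4*(\<bar>b\<bar>+1)^2 * (a*t + b*t^2) = a^2 * (2*\<bar>b\<bar> + 2 + b)"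
  proof -
    define B where "B = \<bar>b\<bar>+1"
    have B: "B > 0" unfolding B_def by simp
    have "4*B^2 * (a*(a/(2*B)) + b*(a/(2*B))^2) = a^2 * (2*B + b)"
      using B by (simp add: field_simps power2_eq_square)
    thus ?thesis unfolding t_def B_def by simp
  qed
  ultimately have "a^2 * (2*\<bar>b\<bar> + 2 + b) \<le> 0" by simp
  moreover have "2*\<bar>b\<bar> + 2 + b > 0" by linarith
  ultimately have "a^2 \<le> 0" by (simp add: mult_le_0_iff)
  thus ?thesis by simp
qed

lemma quad_aux: "(L::real) + 2*t*p + t^2*r \<le> L*(1 + 2*t*q + t^2*u) \<Longrightarrow> 2*(p - L*q)*t + (r - L*u)*t^2 \<le> 0"
  by (simp add: algebra_simps)

lemma sym_inner:
  fixes M :: "real^'n^'n"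
  assumes "transpose M = M"
  shows "x \<bullet> (M *v y) = (M *v x) \<bullet> y"
  by (metis assms dot_lmul_matrix transpose_matrix_vector)

lemma cont_q: "continuous_on S (\<lambda>x. x \<bullet> ((M::real^'n^'n) *v x))"
  by (intro continuous_intros)


lemma eig_exists:
  fixes M :: "real^'n^'n"
  assumes sym: "transpose M = M" and S: "subspace S"
    and inv: "\<And>x. x \<in> S \<Longrightarrow> M *v x \<in> S" and ne: "x0 \<in> S" "x0 \<noteq> 0"
  shows "\<exists>v\<in>S. norm v = 1 \<and> (\<exists>l. M *v v = l *\<^sub>R v)"
proof -
  let ?q = "\<lambda>x. x \<bullet> (M *v x)"
  define K where "K = S \<inter> sphere 0 1"
  have "compact K" unfolding K_def
    by (simp add: S closed_Int_compact closed_subspace)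
  moreover have "x0 /\<^sub>R norm x0 \<in> K" unfolding K_def
    using ne S by (simp add: subspace_mul)
  hence "K \<noteq> {}" by blast
  moreover have "continuous_on K ?q" by (intro continuous_intros)
  ultimately have "\<exists>x\<in>K. \<forall>y\<in>K. ?q y \<le> ?q x" by (rule continuous_attains_sup)
  then obtain v where vK: "v \<in> K" and vmax: "\<And>y. y \<in> K \<Longrightarrow> ?q y \<le> ?q v"
    by blast
  define l where "l = ?q v"
  have vS: "v \<in> S" and nv: "norm v = 1" using vK unfolding K_def by auto
  have bound: "?q x \<le> l * (x \<bullet> x)" if "x \<in> S" for x
  proof (cases "x = 0")
    case True thus ?thesis by simp
  next
    case False
    have "x /\<^sub>R norm x \<in> K" unfolding K_def using that False S by (simp add: subspace_mul)
    hence "?q (x /\<^sub>R norm x) \<le> l" using vmax l_def by blast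
    moreover have "?q (x /\<^sub>R norm x) = ?q x / (norm x)^2"
      by (simp add: matrix_vector_mult_scaleR power2_eq_square divide_simps)
    ultimately have "?q x \<le> l * (norm x)^2" using False
      by (simp add: divide_le_eq)
    thus ?thesis by (simp add: power2_norm_eq_inner)
  qed
  have key: "w \<bullet> (M *v v - l *\<^sub>R v) = 0" if wS: "w \<in> S" for w
  proof -
    have "2*(w \<bullet> (M *v v) - l * (w \<bullet> v)) * t + (?q w - l * (w \<bullet> w)) * t^2 \<le> 0" for t
    proof -
      have xS: "v + t *\<^sub>R w \<in> S" using S vS wS by (simp add: subspace_add subspace_mul)
      have "?q (v + t *\<^sub>R w) \<le> l * ((v + t *\<^sub>R w) \<bullet> (v + t *\<^sub>R w))"
        using bound xS by blast
      moreover have "?q (v + t *\<^sub>R w) = ?q v + 2*t*(w \<bullet> (M *v v)) + t^2 * ?q w"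
      proof -
        have e1: "M *v (v + t *\<^sub>R w) = M *v v + t *\<^sub>R (M *v w)"
          by (simp add: matrix_vector_right_distrib matrix_vector_mult_scaleR)
        have e2: "v \<bullet> (M *v w) = w \<bullet> (M *v v)"
          using sym_inner[OF sym, of v w] by (simp add: inner_commute)
        have "?q (v + t *\<^sub>R w) = v \<bullet> (M *v v) + t * (v \<bullet> (M *v w)) + t * (w \<bullet> (M *v v)) + t*t * (w \<bullet> (M *v w))"
          unfolding e1 by (simp add: inner_add_left inner_add_right algebra_simps)
        thus ?thesis unfolding e2 by (simp add: power2_eq_square)
      qed
      moreover have "(v + t *\<^sub>R w) \<bullet> (v + t *\<^sub>R w) = 1 + 2*t*(w \<bullet> v) + t^2 * (w \<bullet> w)"
      proof -
        have "v \<bullet> v = 1" using nv by (simp add: power2_norm_eq_inner[symmetric])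
        moreover have "(v + t *\<^sub>R w) \<bullet> (v + t *\<^sub>R w) = v \<bullet> v + t * (v \<bullet> w) + t * (w \<bullet> v) + t*t*(w \<bullet> w)"
          by (simp add: inner_add_left inner_add_right algebra_simps)
        ultimately show ?thesis by (simp add: power2_eq_square inner_commute)
      qed
      ultimately have "l + 2*t*(w \<bullet> (M *v v)) + t^2 * ?q w \<le> l * (1 + 2*t*(w \<bullet> v) + t^2 * (w \<bullet> w))"
        unfolding l_def by simp
      thus ?thesis by (rule quad_aux)
    qed
    hence "2*(w \<bullet> (M *v v) - l * (w \<bullet> v)) = 0" by (rule quad_zero)
    thus ?thesis by (simp add: inner_diff_right)
  qed
  have "M *v v - l *\<^sub>R v \<in> S" using S vS inv by (simp add: subspace_diff subspace_mul)
  from key[OF this] have "M *v v = l *\<^sub>R v" by simp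
  thus ?thesis using vS nv by blast
qed


lemma eig_basis_k:
  fixes M :: "real^'n^'n"
  assumes sym: "transpose M = M"
  shows "k \<le> CARD('n) \<Longrightarrow> \<exists>B. card B = k \<and> finite B \<and> (\<forall>b\<in>B. norm b = 1 \<and> (\<exists>l. M *v b = l *\<^sub>R b)) \<and> pairwise orthogonal B"
proof (induction k)
  case 0
  show ?case by (intro exI[of _ "{}"]) auto
next
  case (Suc k)
  then obtain B where cB: "card B = k" and fB: "finite B"
    and eB: "\<forall>b\<in>B. norm b = 1 \<and> (\<exists>l. M *v b = l *\<^sub>R b)" and oB: "pairwise orthogonal B"
    by auto
  have "0 \<notin> B" using eB by force
  hence indB: "independent B" using oB by (simp add: pairwise_orthogonal_independent)
  have "dim (span B) = k" using dim_span_eq_card_independent[OF indB] cB by simp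
  have dU: "dim (UNIV :: (real^'n) set) = CARD('n)" by simp
  have "span B \<noteq> UNIV"
  proof
    assume "span B = UNIV"
    hence "dim (span B) = dim (UNIV :: (real^'n) set)" by simp
    thus False using \<open>dim (span B) = k\<close> dU Suc.prems by simp
  qed
  hence "span B \<subset> span UNIV" by auto
  then obtain x where x0: "x \<noteq> 0" and xo: "\<And>y. y \<in> span B \<Longrightarrow> orthogonal x y"
    using orthogonal_to_subspace_exists_gen[of B UNIV] by metis
  define S where "S = {y. \<forall>b \<in> B. orthogonal b y}"
  have subS: "subspace S" unfolding S_def by (rule subspace_orthogonal_to_vectors)
  have invS: "M *v y \<in> S" if "y \<in> S" for y
    unfolding S_def mem_Collect_eq
  proof (intro ballI)
    fix b assume bB: "b \<in> B"
    then obtain l where l: "M *v b = l *\<^sub>R b" using eB by blast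
    have "b \<bullet> (M *v y) = (M *v b) \<bullet> y" by (rule sym_inner[OF sym])
    also have "\<dots> = l * (b \<bullet> y)" using l by simp
    also have "\<dots> = 0" using that bB unfolding S_def orthogonal_def by simp
    finally show "orthogonal b (M *v y)" by (simp add: orthogonal_def)
  qed
  have xS: "x \<in> S" unfolding S_def using xo span_superset orthogonal_commute
    by blast
  obtain v where vS: "v \<in> S" and nv: "norm v = 1" and ev: "\<exists>l. M *v v = l *\<^sub>R v"
    using eig_exists[OF sym subS invS xS x0] by blast
  have vB: "v \<notin> B"
  proof
    assume "v \<in> B"
    hence "orthogonal v v" using vS unfolding S_def by blast
    thus False using nv by (simp add: orthogonal_def)
  qed
  show ?case
  proof (intro exI[of _ "insert v B"] conjI)
    show "card (insert v B) = Suc k" using vB fB cB by simp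
    show "finite (insert v B)" using fB by simp
    show "\<forall>b\<in>insert v B. norm b = 1 \<and> (\<exists>l. M *v b = l *\<^sub>R b)" using eB nv ev by blast
    show "pairwise orthogonal (insert v B)" using oB vS unfolding S_def pairwise_insert
      by (auto simp: orthogonal_commute)
  qed
qed


lemma F_le_H:
  fixes t :: real assumes "t \<ge> 0"
  shows "F_fun t \<le> t^2/(1+t)"
proof -
  have "ln (1/(1+t)) \<le> 1/(1+t) - 1" using assms by (intro ln_le_minus_one) simp
  hence "ln (1+t) \<ge> 1 - 1/(1+t)" using assms by (simp add: ln_div)
  moreover have "1 - 1/(1+t) = t/(1+t)" using assms by (simp add: field_simps)
  moreover have "t - t/(1+t) = t^2/(1+t)" using assms by (simp add: field_simps power2_eq_square)
  ultimately show ?thesis unfolding F_fun_def by linarith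
qed

lemma H_le_sqrt:
  fixes a :: real assumes a: "a \<ge> 0"
  shows "\<bar>a-1\<bar>^2/(1+\<bar>a-1\<bar>) \<le> 4*(sqrt a - 1)^2"
proof -
  define r where "r = sqrt a"
  have r0: "r \<ge> 0" and ar: "a = r^2" using a unfolding r_def by auto
  have w: "\<bar>a-1\<bar>^2 = (r-1)^2 * (r+1)^2" unfolding ar by (simp add: power2_eq_square algebra_simps abs_mult_self_eq)
  have "(r+1)^2 \<le> 4*(1+\<bar>a-1\<bar>)"
  proof (cases "r \<ge> 1")
    case True
    hence "\<bar>a-1\<bar> = r^2 - 1" unfolding ar using r0
      by (simp add: power2_eq_square, smt (verit) mult_mono one_le_power power2_eq_square)
    moreover have "(r+1)^2 \<le> (2*r)^2" by (rule power_mono) (use True in auto)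
    ultimately show ?thesis by (simp add: power2_eq_square)
  next
    case False
    hence "(r+1)^2 \<le> 2^2" using r0 by (intro power_mono) auto
    hence "(r+1)^2 \<le> 4" by simp
    moreover have "(4::real) \<le> 4*(1+\<bar>a-1\<bar>)" by simp
    ultimately show ?thesis by linarith
  qed
  hence "(r-1)^2 * (r+1)^2 \<le> (r-1)^2 * (4*(1+\<bar>a-1\<bar>))" by (simp add: mult_left_mono)
  hence "\<bar>a-1\<bar>^2 \<le> 4*(r-1)^2 * (1+\<bar>a-1\<bar>)" unfolding w by (simp add: algebra_simps)
  thus ?thesis unfolding r_def by (simp add: divide_le_eq add_pos_nonneg)
qed

lemma H_le_lin:
  fixes a :: real assumes a: "a \<ge> 0"
  shows "\<bar>a-1\<bar>^2/(1+\<bar>a-1\<bar>) \<le> a + 1"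
proof -
  have "\<bar>a-1\<bar>^2 \<le> \<bar>a-1\<bar> * (1+\<bar>a-1\<bar>)" by (simp add: power2_eq_square algebra_simps)
  hence "\<bar>a-1\<bar>^2/(1+\<bar>a-1\<bar>) \<le> \<bar>a-1\<bar>" by (simp add: divide_le_eq add_pos_nonneg)
  thus ?thesis using a by linarith
qed

lemma psi_nonneg: "(r::real) > 0 \<Longrightarrow> r - 1 - ln r \<ge> 0"
  using ln_le_minus_one by fastforce

lemma R_bound:
  fixes a A :: real assumes a: "a > 0" and A: "A > 0"
  shows "A*((a/A - 1 - ln(a/A)) + (1/A - 1 - ln(1/A))) \<ge> (sqrt a - 1)^2"
proof -
  define r where "r = sqrt a / A"
  have r: "r > 0" unfolding r_def using a A by simp
  have "A*((a/A - 1 - ln(a/A)) + (1/A - 1 - ln(1/A))) - (sqrt a - 1)^2 = 2*A*(r - 1 - ln r)"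
  proof -
    have l1: "ln (a/A) = ln a - ln A" using a A by (simp add: ln_div)
    have l2: "ln (1/A) = - ln A" using A by (simp add: ln_div)
    have l3: "ln r = ln a / 2 - ln A" unfolding r_def using a A by (simp add: ln_div ln_sqrt)
    have l4: "(sqrt a)^2 = a" using a by simp
    show ?thesis unfolding l1 l2 l3 unfolding r_def using A l4
      by (simp add: field_simps power2_eq_square)
  qed
  moreover have "2*A*(r - 1 - ln r) \<ge> 0" using A psi_nonneg[OF r] by simp
  ultimately show ?thesis by linarith
qed

lemma exp_bound:
  fixes D :: real assumes "0 \<le> D" "D \<le> 1"
  shows "exp (-D) \<le> 1 - D/2"
proof -
  have "1 + D \<le> exp D" by simp
  hence "exp (-D) \<le> 1/(1+D)" using assms by (simp add: exp_minus field_simps)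
  also have "\<dots> \<le> 1 - D/2"
  proof -
    have "D*D \<le> D*1" using assms by (intro mult_left_mono) auto
    hence "1 \<le> (1 - D/2)*(1+D)" by (simp add: algebra_simps)
    thus ?thesis using assms by (simp add: divide_le_eq)
  qed
  finally show ?thesis .
qed


lemma scalar_main:
  fixes a :: "'n::finite \<Rightarrow> real" and \<beta> :: real
  assumes a0: "\<And>i. a i \<ge> 0" and bn: "\<beta> \<ge> real CARD('n)"
  shows "\<beta> + ((\<Sum>i\<in>UNIV. a i) - real CARD('n)) - \<beta> * (\<Prod>i\<in>UNIV. a i) powr (1/\<beta>)
         \<ge> 3 / (64 * \<beta>) * (1 - real CARD('n) / \<beta>)^2 * F_fun (sqrt (\<Sum>i\<in>UNIV. (a i - 1)^2))"
proof -
  define n where "n = real CARD('n)"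
  define S where "S = (\<Sum>i\<in>UNIV. a i)"
  define G where "G = (\<Prod>i\<in>UNIV. a i) powr (1/\<beta>)"
  define A where "A = (S + \<beta> - n) / \<beta>"
  define s1 where "s1 = 1 - n/\<beta>"
  define H where "H = (\<Sum>i\<in>UNIV. \<bar>a i - 1\<bar>^2/(1+\<bar>a i - 1\<bar>))"
  define t where "t = sqrt (\<Sum>i\<in>UNIV. (a i - 1)^2)"
  have n1: "n \<ge> 1" unfolding n_def by simp
  have b1: "\<beta> \<ge> 1" using n1 bn unfolding n_def by linarith
  hence bpos: "\<beta> > 0" by simp
  have S0: "S \<ge> 0" unfolding S_def using a0 by (simp add: sum_nonneg)
  have s1_0: "s1 \<ge> 0" and s1_1: "s1 \<le> 1" unfolding s1_def using bn bpos n1 n_def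
    by (auto simp: divide_le_eq)
  have bA: "\<beta> * A = S + \<beta> - n" unfolding A_def using bpos by simp
  have A_s1: "A \<ge> s1" unfolding A_def s1_def using S0 bpos by (simp add: field_simps)
  have LHS: "\<beta> + (S - n) - \<beta> * G = \<beta> * (A - G)" using bA by (simp add: algebra_simps)
  have t0: "t \<ge> 0" unfolding t_def by (simp add: sum_nonneg)
  have FH: "F_fun t \<le> H"
  proof -
    have "F_fun t \<le> t^2/(1+t)" using F_le_H[OF t0] .
    also have "t^2 = (\<Sum>i\<in>UNIV. (a i - 1)^2)" unfolding t_def by (simp add: sum_nonneg)
    also have "(\<Sum>i\<in>UNIV. (a i - 1)^2)/(1+t) = (\<Sum>i\<in>UNIV. \<bar>a i - 1\<bar>^2/(1+t))"
      by (simp add: sum_divide_distrib)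
    also have "\<dots> \<le> H" unfolding H_def
    proof (rule sum_mono)
      fix i :: 'n
      have "(a i - 1)^2 \<le> (\<Sum>j\<in>UNIV. (a j - 1)^2)"
        by (rule member_le_sum) auto
      hence "sqrt ((a i - 1)^2) \<le> t" unfolding t_def by (rule real_sqrt_le_mono)
      hence "\<bar>a i - 1\<bar> \<le> t" by simp
      thus "\<bar>a i - 1\<bar>^2/(1+t) \<le> \<bar>a i - 1\<bar>^2/(1+\<bar>a i - 1\<bar>)"
        by (intro divide_left_mono) (auto simp: add_pos_nonneg)
    qed
    finally show ?thesis .
  qed
  define c where "c = (3::real)/64"
  have RHS: "3 / (64 * \<beta>) * (1 - n / \<beta>)^2 * F_fun t \<le> c * s1^2 / \<beta> * H"
  proof -
    have "3 / (64 * \<beta>) * (1 - n / \<beta>)^2 = c * s1^2 / \<beta>" unfolding c_def s1_def by simp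
    moreover have "c * s1^2 / \<beta> \<ge> 0" unfolding c_def using bpos by simp
    ultimately show ?thesis using FH by (metis mult_left_mono)
  qed
  have H_lin: "H \<le> S + n"
  proof -
    have "H \<le> (\<Sum>i\<in>UNIV. a i + 1)" unfolding H_def by (rule sum_mono) (rule H_le_lin[OF a0])
    thus ?thesis unfolding S_def n_def by (simp add: sum.distrib)
  qed
  have H0: "H \<ge> 0" unfolding H_def by (simp add: sum_nonneg)
  have claimX: "c * s1^2 / \<beta> * H \<le> \<beta> * (A - G)" if half: "A - G \<ge> A/2"
  proof -
    have "c * s1^2 / \<beta> * H \<le> c * s1^2 / \<beta> * (S + n)"
      using H_lin H0 bpos by (intro mult_left_mono) (auto simp: c_def)
    also have "\<dots> \<le> c * (S + \<beta> - n)"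
    proof -
      have "s1^2 \<le> s1" using s1_0 s1_1 by (simp add: power2_eq_square mult_left_le)
      have "s1^2 * S \<le> \<beta> * S" using \<open>s1^2 \<le> s1\<close> s1_1 b1 S0 by (intro mult_right_mono) auto
      moreover have "s1^2 * n \<le> \<beta> * (\<beta> - n)"
      proof -
        have "s1 * n \<le> \<beta> - n"
        proof -
          have "s1 * n \<le> s1 * \<beta>" using s1_0 bn n_def by (intro mult_left_mono) auto
          also have "s1 * \<beta> = \<beta> - n" unfolding s1_def using bpos by (simp add: field_simps)
          finally show ?thesis .
        qed
        moreover have "s1^2 * n \<le> s1 * n" using \<open>s1^2 \<le> s1\<close> n1 by (intro mult_right_mono) auto
        moreover have "\<beta> - n \<le> \<beta> * (\<beta> - n)"
        proof -
          have "0 \<le> \<beta> - n" using bn unfolding n_def by simp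
          hence "(\<beta> - n) * 1 \<le> (\<beta> - n) * \<beta>" using b1 by (intro mult_left_mono) auto
          thus ?thesis by (simp add: mult.commute)
        qed
        ultimately show ?thesis by linarith
      qed
      ultimately have "s1^2 * (S + n) \<le> \<beta> * (S + \<beta> - n)" by (simp add: algebra_simps)
      hence "s1^2 * (S + n) / \<beta> \<le> S + \<beta> - n" using bpos by (simp add: divide_le_eq mult.commute)
      hence "c * (s1^2 * (S + n) / \<beta>) \<le> c * (S + \<beta> - n)" by (intro mult_left_mono) (auto simp: c_def)
      thus ?thesis by simp
    qed
    also have "\<dots> \<le> (S + \<beta> - n)/2"
    proof -
      have "S + \<beta> - n \<ge> 0" using S0 bn unfolding n_def by simp
      thus ?thesis unfolding c_def by simp
    qed
    also have "\<dots> = \<beta> * (A/2)" using bA by simp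
    also have "\<dots> \<le> \<beta> * (A - G)" using half bpos by (intro mult_left_mono) auto
    finally show ?thesis .
  qed
  have goal: "c * s1^2 / \<beta> * H \<le> \<beta> * (A - G)"
  proof (cases "\<exists>i. a i = 0")
    case True
    hence "(\<Prod>i\<in>UNIV. a i) = 0" by simp
    hence "G = 0" unfolding G_def by simp
    thus ?thesis using claimX A_s1 s1_0 by simp
  next
    case False
    hence apos: "\<And>i. a i > 0" using a0 by (metis less_eq_real_def)
    have Spos: "S > 0" unfolding S_def using apos by (simp add: sum_pos)
    have Apos: "A > 0" unfolding A_def using Spos bn bpos n_def by simp
    define D where "D = ln A - (\<Sum>i\<in>UNIV. ln (a i)) / \<beta>"
    have prodpos: "(\<Prod>i\<in>UNIV. a i) > 0" using apos by (simp add: prod_pos)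
    have G_eq: "G = A * exp (- D)"
    proof -
      have "G = exp (1/\<beta> * ln (\<Prod>i\<in>UNIV. a i))" unfolding G_def powr_def using prodpos False by simp
      also have "ln (\<Prod>i\<in>UNIV. a i) = (\<Sum>i\<in>UNIV. ln (a i))"
        using apos by (intro ln_prod) (auto simp: less_imp_neq[symmetric])
      also have "exp (1/\<beta> * (\<Sum>i\<in>UNIV. ln (a i))) = exp (ln A - D)" unfolding D_def by simp
      also have "\<dots> = A * exp (-D)" using Apos by (simp add: exp_diff exp_minus divide_inverse)
      finally show ?thesis .
    qed
    define psi :: "real \<Rightarrow> real" where "psi r = r - 1 - ln r" for r
    have D_eq: "D = s1 * psi (1/A) + (\<Sum>i\<in>UNIV. psi (a i / A)) / \<beta>"
    proof -
      have L: "(\<Sum>i\<in>UNIV. ln (a i / A)) = (\<Sum>i\<in>UNIV. ln (a i)) - n * ln A"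
      proof -
        have "(\<Sum>i\<in>UNIV. ln (a i / A)) = (\<Sum>i\<in>UNIV. ln (a i) - ln A)"
          using apos Apos by (intro sum.cong) (auto simp: ln_div less_imp_neq[symmetric])
        thus ?thesis unfolding n_def by (simp add: sum_subtractf)
      qed
      have "(\<Sum>i\<in>UNIV. psi (a i / A)) = S / A - n - (\<Sum>i\<in>UNIV. ln (a i / A))"
        unfolding psi_def S_def n_def by (simp add: sum_subtractf sum_divide_distrib)
      hence P: "(\<Sum>i\<in>UNIV. psi (a i / A)) = S / A - n - (\<Sum>i\<in>UNIV. ln (a i)) + n * ln A"
        unfolding L by simp
      have p: "psi (1/A) = 1/A - 1 + ln A" unfolding psi_def using Apos by (simp add: ln_div)
      have bs: "\<beta> * s1 = \<beta> - n" unfolding s1_def using bpos by (simp add: field_simps)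
      have SA: "S / A = \<beta> - (\<beta> * s1) * (1/A)"
      proof -
        have "S = \<beta> * A - \<beta> * s1" using bA bs by simp
        hence "S / A = (\<beta> * A) / A - \<beta> * s1 / A" by (simp add: diff_divide_distrib)
        thus ?thesis using Apos by simp
      qed
      define X where "X = 1/A"
      define P' where "P' = (\<Sum>i\<in>UNIV. psi (a i / A))"
      define L' where "L' = (\<Sum>i\<in>UNIV. ln (a i))"
      have e1: "P' = \<beta> - (\<beta> - n) * X - n - L' + n * ln A" using P SA bs unfolding P'_def L'_def X_def by simp
      have e2: "psi (1/A) = X - 1 + ln A" using p unfolding X_def .
      have "\<beta> * (s1 * psi (1/A) + P' / \<beta>) = (\<beta> * s1) * psi (1/A) + P'" using bpos
        by (simp add: algebra_simps)
      also have "\<dots> = \<beta> * ln A - L'" unfolding bs e1 e2 by (simp add: algebra_simps)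
      also have "\<dots> = \<beta> * D" unfolding D_def L'_def using bpos by (simp add: algebra_simps)
      finally have "\<beta> * (s1 * psi (1/A) + P' / \<beta>) = \<beta> * D" .
      thus ?thesis using bpos unfolding P'_def by simp
    qed
    have psi0: "psi r \<ge> 0" if "r > 0" for r unfolding psi_def using psi_nonneg[OF that] .
    have D0: "D \<ge> 0" unfolding D_eq using s1_0 psi0 Apos apos bpos
      by (intro add_nonneg_nonneg mult_nonneg_nonneg divide_nonneg_pos sum_nonneg) auto
    show ?thesis
    proof (cases "D \<ge> 1")
      case True
      have "exp (-D) \<le> exp (-1)" using True by simp
      also have "exp (-1::real) \<le> 1/2"
      proof -
        have "2 \<le> exp (1::real)" using exp_ge_add_one_self[of 1] by simp
        thus ?thesis by (simp add: exp_minus divide_simps)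
      qed
      finally have "A * exp (-D) \<le> A * (1/2)" using Apos by (intro mult_left_mono) auto
      hence "A - G \<ge> A/2" unfolding G_eq by simp
      thus ?thesis by (rule claimX)
    next
      case False
      have "exp (-D) \<le> 1 - D/2" using exp_bound D0 False by simp
      hence "A * exp (-D) \<le> A * (1 - D/2)" using Apos by (intro mult_left_mono) auto
      hence AG: "A - G \<ge> A * D / 2" unfolding G_eq by (simp add: algebra_simps)
      define T where "T = (\<Sum>i\<in>UNIV. (sqrt (a i) - 1)^2)"
      have T0: "T \<ge> 0" unfolding T_def by (simp add: sum_nonneg)
      have "c * s1^2 / \<beta> * H \<le> c * s1 * (4 * T)"
      proof -
        have "H \<le> 4 * T" unfolding H_def T_def sum_distrib_left
          by (rule sum_mono) (rule H_le_sqrt[OF a0])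
        hence "c * s1^2 / \<beta> * H \<le> c * s1^2 / \<beta> * (4*T)" using bpos
          by (intro mult_left_mono) (auto simp: c_def)
        moreover have "c * s1^2 / \<beta> \<le> c * s1"
        proof -
          have "s1^2 \<le> s1" using s1_0 s1_1 by (simp add: power2_eq_square mult_left_le)
          also have "s1 \<le> s1 * \<beta>" using s1_0 b1 by (simp add: mult_le_cancel_left1)
          finally have "s1^2 / \<beta> \<le> s1" using bpos by (simp add: divide_le_eq)
          thus ?thesis unfolding c_def by simp
        qed
        moreover have "c * s1^2 / \<beta> * (4*T) \<le> c * s1 * (4*T)"
          using calculation(2) T0 by (intro mult_right_mono) auto
        ultimately show ?thesis by linarith
      qed
      also have "\<dots> \<le> s1 / 2 * T" unfolding c_def using s1_0 T0
        by (simp add: mult_right_mono)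
      also have "\<dots> \<le> \<beta> * (A * D / 2)"
      proof -
        have "s1 * T \<le> (\<Sum>i\<in>UNIV. s1 * (A * (psi (a i / A) + psi (1/A))))"
          unfolding T_def sum_distrib_left
        proof (rule sum_mono, rule mult_left_mono)
          fix i
          show "(sqrt (a i) - 1)^2 \<le> A * (psi (a i / A) + psi (1/A))"
            unfolding psi_def by (rule R_bound[OF apos Apos])
        qed (rule s1_0)
        also have "\<dots> = A * (s1 * (\<Sum>i\<in>UNIV. psi (a i / A)) + n * (s1 * psi (1/A)))"
          unfolding n_def by (simp add: sum_distrib_left sum.distrib algebra_simps)
        also have "\<dots> \<le> A * ((\<Sum>i\<in>UNIV. psi (a i / A)) + \<beta> * (s1 * psi (1/A)))"
        proof -
          have P0: "(\<Sum>i\<in>UNIV. psi (a i / A)) \<ge> 0" using psi0 apos Apos by (simp add: sum_nonneg)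
          have Q0: "s1 * psi (1/A) \<ge> 0" using psi0 Apos s1_0 by simp
          have "s1 * (\<Sum>i\<in>UNIV. psi (a i / A)) \<le> (\<Sum>i\<in>UNIV. psi (a i / A))"
            using P0 s1_1 s1_0 mult_right_mono[of s1 1 "(\<Sum>i\<in>UNIV. psi (a i / A))"] by simp
          moreover have "n * (s1 * psi (1/A)) \<le> \<beta> * (s1 * psi (1/A))"
            using Q0 bn n_def by (intro mult_right_mono) auto
          ultimately show ?thesis using Apos by (intro mult_left_mono) auto
        qed
        also have "\<dots> = \<beta> * (A * D)" unfolding D_eq using bpos by (simp add: field_simps)
        finally show ?thesis by simp
      qed
      also have "\<dots> \<le> \<beta> * (A - G)" using AG bpos by (intro mult_left_mono) auto
      finally show ?thesis .
    qed
  qed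
  show ?thesis
    using RHS goal LHS unfolding n_def[symmetric] S_def[symmetric] G_def[symmetric] t_def[symmetric]
    by linarith
qed


lemma hs_sq: "(hs_norm (A::real^'n^'n))^2 = trace (transpose A ** A)"
proof -
  have "trace (transpose A ** A) = (\<Sum>i\<in>UNIV. \<Sum>k\<in>UNIV. (A$k$i)^2)"
    unfolding trace_def by (simp add: matrix_matrix_mult_def transpose_def power2_eq_square)
  also have "\<dots> = (\<Sum>k\<in>UNIV. \<Sum>i\<in>UNIV. (A$k$i)^2)" by (rule sum.swap)
  finally show ?thesis unfolding hs_norm_def by (simp add: sum_nonneg)
qed

lemma matrix_sub_ldistrib: "(A::real^'n^'m) ** (B - C) = A ** B - A ** (C::real^'k^'n)"
  by (simp add: vec_eq_iff matrix_matrix_mult_def sum_subtractf algebra_simps)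

lemma matrix_sub_rdistrib: "((B::real^'n^'m) - C) ** (A::real^'k^'n) = B ** A - C ** A"
  by (simp add: vec_eq_iff matrix_matrix_mult_def sum_subtractf algebra_simps)

lemma hs_nonneg: "hs_norm A \<ge> 0" unfolding hs_norm_def by (simp add: sum_nonneg)

theorem lemma3:
  fixes M :: "real^'n^'n" and \<beta> :: real
  assumes "\<beta> \<ge> real CARD('n)"
    and "psd_matrix M"
  shows "\<beta> + trace (M - mat 1) - \<beta> * (det M) powr (1 / \<beta>)
         \<ge> 3 / (64 * \<beta>) * (1 - real CARD('n) / \<beta>)^2 * F_fun (hs_norm (M - mat 1))"
proof -
  have sym: "transpose M = M" and psd: "\<And>x. 0 \<le> x \<bullet> (M *v x)"
    using assms(2) unfolding psd_matrix_def by auto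
  obtain B where cB: "card B = CARD('n)" and fB: "finite B"
    and eB: "\<forall>b\<in>B. norm b = 1 \<and> (\<exists>l. M *v b = l *\<^sub>R b)" and oB: "pairwise orthogonal B"
    using eig_basis_k[OF sym, of "CARD('n)"] by auto
  obtain f where bf: "bij_betw f (UNIV::'n set) B"
    using finite_same_card_bij[of "UNIV::'n set" B] fB cB by auto
  have fB': "f j \<in> B" for j using bf by (auto simp: bij_betw_def)
  have finj: "f i = f j \<Longrightarrow> i = j" for i j using bf by (auto simp: bij_betw_def inj_on_def)
  define lam where "lam j = (SOME l. M *v f j = l *\<^sub>R f j)" for j
  have ev: "M *v f j = lam j *\<^sub>R f j" for j
    unfolding lam_def using eB fB' by (metis (mono_tags, lifting) someI_ex)
  have on: "f i \<bullet> f j = (if i = j then 1 else 0)" for i j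
  proof (cases "i = j")
    case True
    have "norm (f j) = 1" using eB fB' by blast
    thus ?thesis using True by (simp add: dot_square_norm)
  next
    case False
    hence "f i \<noteq> f j" using finj by blast
    hence "orthogonal (f i) (f j)" using oB fB' unfolding pairwise_def by blast
    thus ?thesis using False by (simp add: orthogonal_def)
  qed
  define P :: "real^'n^'n" where "P = (\<chi> i j. f j $ i)"
  have PtP: "transpose P ** P = mat 1"
  proof -
    have "(transpose P ** P) $ i $ j = f i \<bullet> f j" for i j
      unfolding P_def by (simp add: matrix_matrix_mult_def transpose_def inner_vec_def)
    thus ?thesis using on by (simp add: vec_eq_iff mat_def)
  qed
  hence PPt: "P ** transpose P = mat 1" using matrix_left_right_inverse by blast
  define D where "D = transpose P ** (M ** P)"
  have MP: "(M ** P) $ k $ j = lam j * f j $ k" for k j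
  proof -
    have "(M ** P) $ k $ j = (M *v f j) $ k"
      unfolding P_def by (simp add: matrix_matrix_mult_def matrix_vector_mult_def)
    thus ?thesis using ev by simp
  qed
  have Dij: "D $ i $ j = (if i = j then lam i else 0)" for i j
  proof -
    have "D $ i $ j = (\<Sum>k\<in>UNIV. (transpose P)$i$k * (M ** P)$k$j)"
      unfolding D_def matrix_matrix_mult_def by simp
    also have "\<dots> = (\<Sum>k\<in>UNIV. f i $ k * (lam j * f j $ k))"
      unfolding MP by (simp add: transpose_def P_def)
    also have "\<dots> = lam j * (f i \<bullet> f j)"
      by (simp add: inner_vec_def sum_distrib_left algebra_simps)
    finally show ?thesis using on by simp
  qed
  have Mdec: "M = P ** D ** transpose P"
  proof -
    have "P ** D ** transpose P = (P ** transpose P) ** M ** (P ** transpose P)"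
      unfolding D_def by (simp add: matrix_mul_assoc)
    thus ?thesis using PPt by simp
  qed
  have detP: "det P * det P = 1"
  proof -
    have "det (transpose P ** P) = 1" using PtP by simp
    thus ?thesis by (simp add: det_mul)
  qed
  have detM: "det M = (\<Prod>i\<in>UNIV. lam i)"
  proof -
    have "det M = det P * det D * det P" using Mdec by (simp add: det_mul)
    also have "\<dots> = det D" using detP by (simp add: algebra_simps)
    also have "det D = (\<Prod>i\<in>UNIV. D$i$i)" by (rule det_diagonal) (simp add: Dij)
    finally show ?thesis by (simp add: Dij)
  qed
  have trM: "trace M = (\<Sum>i\<in>UNIV. lam i)"
  proof -
    have "trace M = trace (P ** (D ** transpose P))" using Mdec by (simp add: matrix_mul_assoc)
    also have "\<dots> = trace ((D ** transpose P) ** P)" by (rule trace_mul_sym)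
    also have "\<dots> = trace D" using PtP by (simp add: matrix_mul_assoc[symmetric])
    finally show ?thesis unfolding trace_def by (simp add: Dij)
  qed
  define E where "E = D - mat 1"
  have Edec: "M - mat 1 = P ** E ** transpose P"
  proof -
    have "P ** E ** transpose P = P ** D ** transpose P - P ** mat 1 ** transpose P"
      unfolding E_def by (simp add: matrix_sub_ldistrib matrix_sub_rdistrib)
    thus ?thesis using Mdec PPt by simp
  qed
  have hsM: "hs_norm (M - mat 1) = sqrt (\<Sum>i\<in>UNIV. (lam i - 1)^2)"
  proof -
    have "(hs_norm (M - mat 1))^2 = trace (transpose (P ** E ** transpose P) ** (P ** E ** transpose P))"
      unfolding Edec by (rule hs_sq)
    also have "transpose (P ** E ** transpose P) ** (P ** E ** transpose P)
        = (P ** transpose E) ** ((transpose P ** P) ** (E ** transpose P))"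
      by (simp add: matrix_transpose_mul matrix_mul_assoc)
    also have "\<dots> = P ** ((transpose E ** E) ** transpose P)"
      using PtP by (simp add: matrix_mul_assoc)
    also have "trace \<dots> = trace (((transpose E ** E) ** transpose P) ** P)" by (rule trace_mul_sym)
    also have "\<dots> = trace (transpose E ** E)" using PtP by (simp add: matrix_mul_assoc[symmetric])
    also have "\<dots> = (hs_norm E)^2" by (rule hs_sq[symmetric])
    finally have "hs_norm (M - mat 1) = hs_norm E"
      using hs_nonneg by (metis power2_eq_imp_eq)
    also have "\<dots> = sqrt (\<Sum>i\<in>UNIV. (lam i - 1)^2)"
    proof -
      have "(E$i$j)^2 = (if j = i then (lam i - 1)^2 else 0)" for i j
        by (simp add: E_def Dij mat_def)
      thus ?thesis unfolding hs_norm_def by simp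
    qed
    finally show ?thesis .
  qed
  have lam0: "lam i \<ge> 0" for i
  proof -
    have "0 \<le> f i \<bullet> (M *v f i)" by (rule psd)
    also have "\<dots> = lam i" using ev on[of i i] by simp
    finally show ?thesis .
  qed
  have "trace (M - mat 1) = (\<Sum>i\<in>UNIV. lam i) - real CARD('n)"
    using trM by (simp add: trace_sub trace_I)
  thus ?thesis using scalar_main[of lam \<beta>, OF lam0 assms(1)] unfolding detM hsM
    by (simp add: algebra_simps)
qed

end
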